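(* Let $(x_n)_n$ and $(y_n)_n$ be bounded sequences in a Banach space $X$. (a) If $\sum_n\|x_n-y_n\|<\infty$, then $\{x_n\}_n$ is a Banach-Saks set if and only if $\{y_n\}_n$ is a Banach-Saks set. (b) $\mathrm{conv}(\{x_n\}_n)$ is a Banach-Saks set if and only if every block sequence in $\mathrm{conv}(\{x_n\}_n)$ has the Banach-Saks property (i.e. forms a Banach-Saks set).
   Context: A subset $A$ of a Banach space is a Banach-Saks set if every sequence in $A$ has a subsequence $(z_n)_n$ whose Ces\`aro means $\frac1n\sum_{k=1}^n z_k$ converge in norm. A block sequence in $\mathrm{conv}(\{x_n\}_n)$ is a sequence $(z_m)_m$ with $z_m=\sum_{k\in F_m}\lambda^{(m)}_k x_k$, where each $(\lambda^{(m)}_k)_{k\in F_m}$ is a convex combination and $F_1<F_2<\cdots$ are finite subsets of $\mathbb N$ ($F<G$ means $\max F<\min G$). *)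

theory Defs
  imports "HOL-Analysis.Analysis"
begin

definition cesaro_mean :: "(nat \<Rightarrow> 'a::real_normed_vector) \<Rightarrow> nat \<Rightarrow> 'a" where
  "cesaro_mean z n = (1 / real (Suc n)) *\<^sub>R (\<Sum>k\<le>n. z k)"

definition banach_saks_set :: "'a::real_normed_vector set \<Rightarrow> bool" where
  "banach_saks_set A \<longleftrightarrow>
     (\<forall>x::nat \<Rightarrow> 'a. (\<forall>n. x n \<in> A) \<longrightarrow>
        (\<exists>r::nat \<Rightarrow> nat. strict_mono r \<and> convergent (cesaro_mean (x \<circ> r))))"

definition block_seq_conv :: "(nat \<Rightarrow> 'a::real_normed_vector) \<Rightarrow> (nat \<Rightarrow> 'a) \<Rightarrow> bool" where
  "block_seq_conv x z \<longleftrightarrow>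
     (\<exists>F c. (\<forall>m. finite (F m) \<and> F m \<noteq> {} \<and> (\<forall>k\<in>F m. 0 \<le> c m k) \<and>
                 (\<Sum>k\<in>F m. c m k) = 1 \<and> z m = (\<Sum>k\<in>F m. c m k *\<^sub>R x k)) \<and>
            (\<forall>m. Max (F m) < Min (F (Suc m))))"

end

theory Submission
  imports Defs "HOL-Library.Diagonal_Subsequence"
begin


lemma cesaro_real_null:
  fixes f :: "nat \<Rightarrow> real"
  assumes lim: "f \<longlonglongrightarrow> 0" and nn: "\<And>n. 0 \<le> f n"
  shows "cesaro_mean f \<longlonglongrightarrow> 0"
proof (rule LIMSEQ_I)
  fix e :: real assume e: "0 < e"
  from LIMSEQ_D[OF lim, of "e/2"] e obtain N where N: "\<And>n. n \<ge> N \<Longrightarrow> norm (f n - 0) < e/2" by auto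
  define S where "S = (\<Sum>k<N. f k)"
  have S0: "0 \<le> S" using nn by (simp add: S_def sum_nonneg)
  obtain M where M: "S / (e/2) < real M" using reals_Archimedean2 by blast
  show "\<exists>no. \<forall>n\<ge>no. norm (cesaro_mean f n - 0) < e"
  proof (intro exI allI impI)
    fix n assume n: "N + M \<le> n"
    have un: "{..n} = {..<N} \<union> {N..n}" using n by auto
    have split: "(\<Sum>k\<le>n. f k) = S + (\<Sum>k\<in>{N..n}. f k)"
      unfolding un S_def by (rule sum.union_disjoint) auto
    have "(\<Sum>k\<in>{N..n}. f k) \<le> (\<Sum>k\<in>{N..n}. e/2)"
    proof (rule sum_mono)
      fix k assume "k \<in> {N..n}"
      hence "norm (f k - 0) < e/2" using N by auto
      thus "f k \<le> e/2" by simp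
    qed
    also have "\<dots> = real (Suc n - N) * (e/2)" by simp
    also have "\<dots> \<le> real (Suc n) * (e/2)" using e by (intro mult_right_mono) auto
    finally have s1: "(\<Sum>k\<le>n. f k) \<le> S + real (Suc n) * (e/2)" using split by linarith
    have "S < real M * (e/2)" using M e by (simp add: field_simps)
    also have "\<dots> \<le> real (Suc n) * (e/2)" using n e by (intro mult_right_mono) auto
    finally have s2: "S < real (Suc n) * (e/2)" .
    have sum0: "0 \<le> (\<Sum>k\<le>n. f k)" using nn by (simp add: sum_nonneg)
    have "(\<Sum>k\<le>n. f k) < real (Suc n) * e" using s1 s2 by linarith
    hence "(\<Sum>k\<le>n. f k) / real (Suc n) < e" by (simp add: field_simps)
    thus "norm (cesaro_mean f n - 0) < e" using sum0 by (simp add: cesaro_mean_def)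
  qed
qed

lemma cesaro_null:
  fixes z :: "nat \<Rightarrow> 'a::real_normed_vector"
  assumes "z \<longlonglongrightarrow> 0"
  shows "cesaro_mean z \<longlonglongrightarrow> 0"
proof -
  have r: "cesaro_mean (\<lambda>k. norm (z k)) \<longlonglongrightarrow> 0"
    by (rule cesaro_real_null) (use assms tendsto_norm_zero in auto)
  have "norm (cesaro_mean z n) \<le> cesaro_mean (\<lambda>k. norm (z k)) n" for n
    by (simp add: cesaro_mean_def norm_sum divide_right_mono)
  thus ?thesis by (intro Lim_null_comparison[OF _ r] always_eventually allI)
qed

lemma cesaro_add: "cesaro_mean (\<lambda>k. f k + g k) n = cesaro_mean f n + cesaro_mean g n"
  by (simp add: cesaro_mean_def sum.distrib scaleR_right_distrib)

lemma cesaro_scale: "cesaro_mean (\<lambda>k. c *\<^sub>R f k) n = c *\<^sub>R cesaro_mean f n"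
  by (simp add: cesaro_mean_def scaleR_sum_right[symmetric])

lemma cesaro_const: "cesaro_mean (\<lambda>k. a) n = a"
  by (simp add: cesaro_mean_def sum_constant_scaleR del: of_nat_Suc)

lemma cesaro_tendsto:
  fixes z :: "nat \<Rightarrow> 'a::real_normed_vector"
  assumes "z \<longlonglongrightarrow> l"
  shows "cesaro_mean z \<longlonglongrightarrow> l"
proof -
  have "cesaro_mean (\<lambda>k. z k - l) \<longlonglongrightarrow> 0"
    by (rule cesaro_null) (use tendsto_diff[OF assms tendsto_const, of l] in simp)
  hence "(\<lambda>n. l + cesaro_mean (\<lambda>k. z k - l) n) \<longlonglongrightarrow> l + 0"
    by (intro tendsto_add) auto
  moreover have "l + cesaro_mean (\<lambda>k. z k - l) n = cesaro_mean z n" for n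
    using cesaro_add[of "\<lambda>k. l" "\<lambda>k. z k - l" n] by (simp add: cesaro_const)
  ultimately show ?thesis by simp
qed

lemma cesaro_conv_perturb:
  fixes f g :: "nat \<Rightarrow> 'a::real_normed_vector"
  assumes "(\<lambda>k. f k - g k) \<longlonglongrightarrow> 0" and "convergent (cesaro_mean g)"
  shows "convergent (cesaro_mean f)"
proof -
  from assms(2) obtain L where L: "cesaro_mean g \<longlonglongrightarrow> L" by (auto simp: convergent_def)
  have "(\<lambda>n. cesaro_mean g n + cesaro_mean (\<lambda>k. f k - g k) n) \<longlonglongrightarrow> L + 0"
    by (intro tendsto_add L cesaro_null assms(1))
  moreover have "cesaro_mean g n + cesaro_mean (\<lambda>k. f k - g k) n = cesaro_mean f n" for n
    using cesaro_add[of g "\<lambda>k. f k - g k" n] by simp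
  ultimately show ?thesis by (auto simp: convergent_def)
qed

lemma bs_part_a:
  fixes x y :: "nat \<Rightarrow> 'a::real_normed_vector"
  assumes d: "(\<lambda>n. norm (x n - y n)) \<longlonglongrightarrow> 0" and bs: "banach_saks_set (range y)"
  shows "banach_saks_set (range x)"
  unfolding banach_saks_set_def
proof (intro allI impI)
  fix v :: "nat \<Rightarrow> 'a" assume v: "\<forall>n. v n \<in> range x"
  define \<sigma> where "\<sigma> n = inv x (v n)" for n
  have v\<sigma>: "v n = x (\<sigma> n)" for n using v by (simp add: \<sigma>_def f_inv_into_f)
  show "\<exists>r. strict_mono r \<and> convergent (cesaro_mean (v \<circ> r))"
  proof (cases "\<exists>c. infinite {n. \<sigma> n = c}")
    case True
    then obtain c where c: "infinite {n. \<sigma> n = c}" by blast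
    define r where "r = enumerate {n. \<sigma> n = c}"
    have "strict_mono r" using c by (simp add: r_def strict_mono_enumerate)
    moreover have "(v \<circ> r) k = x c" for k
      using enumerate_in_set[OF c, of k] by (simp add: r_def v\<sigma>)
    hence "cesaro_mean (v \<circ> r) = (\<lambda>n. x c)"
      using cesaro_const[of "x c"] by (simp add: fun_eq_iff cesaro_mean_def)
    ultimately show ?thesis by (auto simp: convergent_const)
  next
    case False
    have lim\<sigma>: "filterlim \<sigma> at_top sequentially"
      unfolding filterlim_at_top
    proof
      fix N :: nat
      have "finite (\<Union>c\<le>N. {n. \<sigma> n = c})" using False by auto
      moreover have "{n. \<sigma> n \<le> N} = (\<Union>c\<le>N. {n. \<sigma> n = c})" by auto
      ultimately have fin: "finite {n. \<sigma> n \<le> N}" by simp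
      then obtain B where "\<forall>n\<in>{n. \<sigma> n \<le> N}. n \<le> B" using finite_nat_set_iff_bounded_le by blast
      hence "\<forall>n\<ge>Suc B. N \<le> \<sigma> n"
      proof (intro allI impI)
        fix n assume B: "\<forall>n\<in>{n. \<sigma> n \<le> N}. n \<le> B" and n: "Suc B \<le> n"
        show "N \<le> \<sigma> n"
        proof (rule ccontr)
          assume "\<not> N \<le> \<sigma> n"
          hence "n \<in> {n. \<sigma> n \<le> N}" by simp
          with B n show False by force
        qed
      qed
      thus "eventually (\<lambda>n. N \<le> \<sigma> n) sequentially" by (auto simp: eventually_sequentially)
    qed
    have "\<forall>n. (y \<circ> \<sigma>) n \<in> range y" by auto
    with bs obtain r where r: "strict_mono r" "convergent (cesaro_mean (y \<circ> \<sigma> \<circ> r))"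
      unfolding banach_saks_set_def by blast
    have lim2: "filterlim (\<sigma> \<circ> r) at_top sequentially"
      using filterlim_compose[OF lim\<sigma> filterlim_subseq[OF r(1)]] by (simp add: o_def)
    have "(\<lambda>k. norm (x ((\<sigma> \<circ> r) k) - y ((\<sigma> \<circ> r) k))) \<longlonglongrightarrow> 0"
      using filterlim_compose[OF d lim2] by (simp add: o_def)
    hence "(\<lambda>k. (v \<circ> r) k - (y \<circ> \<sigma> \<circ> r) k) \<longlonglongrightarrow> 0"
      by (simp add: v\<sigma> tendsto_norm_zero_iff)
    hence "convergent (cesaro_mean (v \<circ> r))"
      using cesaro_conv_perturb r(2) by blast
    with r(1) show ?thesis by blast
  qed
qed



lemma conv_rep:
  fixes x :: "nat \<Rightarrow> 'a::real_normed_vector"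
  assumes "w \<in> convex hull (range x)"
  shows "\<exists>lam M. (\<forall>k. 0 \<le> lam k) \<and> (\<forall>k>M. lam k = 0) \<and> (\<Sum>k\<le>M. lam k) = 1
            \<and> w = (\<Sum>k\<le>M. lam k *\<^sub>R x k)"
proof -
  from assms obtain S u where S: "finite S" "S \<subseteq> range x" "\<forall>v\<in>S. 0 \<le> u v" "sum u S = 1"
      "(\<Sum>v\<in>S. u v *\<^sub>R v) = w"
    unfolding convex_hull_explicit by blast
  define I where "I = inv x ` S"
  have xinv: "x (inv x v) = v" if "v \<in> S" for v using S(2) that by (auto simp: f_inv_into_f)
  have inj: "inj_on x I" unfolding I_def inj_on_def using xinv by auto
  have xI: "x ` I = S" unfolding I_def image_image using xinv by simp
  have finI: "finite I" using S(1) by (simp add: I_def)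
  have "S \<noteq> {}" using S(4) by auto
  hence "I \<noteq> {}" by (simp add: I_def)
  define M where "M = Max I"
  have IM: "I \<subseteq> {..M}" using finI by (auto simp: M_def)
  define lam where "lam k = (if k \<in> I then u (x k) else 0)" for k
  have "(\<Sum>k\<le>M. lam k) = (\<Sum>k\<in>I. lam k)"
    by (rule sum.mono_neutral_left[symmetric]) (use IM in \<open>auto simp: lam_def\<close>)
  also have "\<dots> = (\<Sum>k\<in>I. u (x k))" by (rule sum.cong) (auto simp: lam_def)
  also have "\<dots> = sum u S" using sum.reindex[OF inj, of u] xI by simp
  finally have s1: "(\<Sum>k\<le>M. lam k) = 1" using S(4) by simp
  have "(\<Sum>k\<le>M. lam k *\<^sub>R x k) = (\<Sum>k\<in>I. lam k *\<^sub>R x k)"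
    by (rule sum.mono_neutral_left[symmetric]) (use IM in \<open>auto simp: lam_def\<close>)
  also have "\<dots> = (\<Sum>k\<in>I. u (x k) *\<^sub>R x k)" by (rule sum.cong) (auto simp: lam_def)
  also have "\<dots> = (\<Sum>v\<in>S. u v *\<^sub>R v)" using sum.reindex[OF inj, of "\<lambda>v. u v *\<^sub>R v"] xI by simp
  finally have s2: "w = (\<Sum>k\<le>M. lam k *\<^sub>R x k)" using S(5) by simp
  have "\<forall>k. 0 \<le> lam k" using S(3) xI by (auto simp: lam_def)
  moreover have "\<forall>k>M. lam k = 0" using IM by (auto simp: lam_def)
  ultimately show ?thesis using s1 s2 by blast
qed

lemma bs_mono: "banach_saks_set B \<Longrightarrow> A \<subseteq> B \<Longrightarrow> banach_saks_set A"
  unfolding banach_saks_set_def by blast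

lemma block_in_hull:
  assumes "block_seq_conv x z"
  shows "range z \<subseteq> convex hull (range x)"
proof -
  from assms obtain F c where Fc: "\<forall>m. finite (F m) \<and> F m \<noteq> {} \<and> (\<forall>k\<in>F m. 0 \<le> c m k) \<and>
                 (\<Sum>k\<in>F m. c m k) = 1 \<and> z m = (\<Sum>k\<in>F m. c m k *\<^sub>R x k)"
    unfolding block_seq_conv_def by blast
  show ?thesis
  proof
    fix v assume "v \<in> range z"
    then obtain m where "v = z m" by auto
    thus "v \<in> convex hull (range x)"
      using Fc convex_sum[of "F m" "convex hull (range x)" "c m" "x"]
      by (auto intro: hull_subset[THEN subsetD])
  qed
qed



lemma diag_conv:
  fixes L :: "nat \<Rightarrow> nat \<Rightarrow> real"
  assumes "\<And>n k. 0 \<le> L n k" "\<And>n k. L n k \<le> 1"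
  shows "\<exists>\<phi>. strict_mono \<phi> \<and> (\<forall>k. convergent (\<lambda>i. L (\<phi> i) k))"
proof -
  interpret subseqs "\<lambda>k s. convergent (\<lambda>i. L (s i) k)"
  proof
    fix k and s :: "nat \<Rightarrow> nat" assume "strict_mono s"
    have "bounded (range (\<lambda>i. L (s i) k))" using assms by (intro boundedI[where B=1]) auto
    then obtain l r where "strict_mono r" "((\<lambda>i. L (s i) k) \<circ> r) \<longlonglongrightarrow> l"
      using bounded_imp_convergent_subsequence by blast
    thus "\<exists>r'. strict_mono r' \<and> convergent (\<lambda>i. L ((s \<circ> r') i) k)"
      by (auto simp: convergent_def o_def)
  qed
  have "convergent (\<lambda>i. L (diagseq i) k)" for k
  proof -
    have "convergent (\<lambda>i. L ((diagseq \<circ> (+) (Suc k)) i) k)"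
    proof (rule diagseq_holds)
      fix r s n assume r: "strict_mono (r::nat\<Rightarrow>nat)" and "convergent (\<lambda>i. L (s i) n)"
      then obtain l where "(\<lambda>i. L (s i) n) \<longlonglongrightarrow> l" by (auto simp: convergent_def)
      from LIMSEQ_subseq_LIMSEQ[OF this r] show "convergent (\<lambda>i. L ((s \<circ> r) i) n)"
        by (auto simp: convergent_def o_def)
    qed
    then obtain l where "(\<lambda>i. L (diagseq (i + Suc k)) k) \<longlonglongrightarrow> l"
      by (auto simp: convergent_def o_def add.commute)
    hence "(\<lambda>i. L (diagseq i) k) \<longlonglongrightarrow> l" by (rule LIMSEQ_offset)
    thus ?thesis by (auto simp: convergent_def)
  qed
  with subseq_diagseq show ?thesis by blast
qed



lemma bs_hull:
  fixes x :: "nat \<Rightarrow> 'a::banach"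
  assumes bx: "bounded (range x)"
    and blk: "\<forall>z. block_seq_conv x z \<longrightarrow> banach_saks_set (range z)"
  shows "banach_saks_set (convex hull (range x))"
  unfolding banach_saks_set_def
proof (intro allI impI)
  fix w :: "nat \<Rightarrow> 'a" assume w: "\<forall>n. w n \<in> convex hull (range x)"
  obtain B where B: "\<And>k. norm (x k) \<le> B" using bx by (auto simp: bounded_iff)
  have B0: "0 \<le> B" using B[of 0] norm_ge_zero[of "x 0"] by linarith
  have "\<forall>n. \<exists>lam M. (\<forall>k. 0 \<le> lam k) \<and> (\<forall>k>M. lam k = 0) \<and> (\<Sum>k\<le>M. lam k) = 1
            \<and> w n = (\<Sum>k\<le>M. lam k *\<^sub>R x k)"
    using conv_rep w by blast
  then obtain lam where "\<forall>n. \<exists>M. (\<forall>k. 0 \<le> lam n k) \<and> (\<forall>k>M. lam n k = 0) \<and> (\<Sum>k\<le>M. lam n k) = 1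
            \<and> w n = (\<Sum>k\<le>M. lam n k *\<^sub>R x k)"
    by (rule choice[THEN exE])
  then obtain M where lm: "\<forall>n. (\<forall>k. 0 \<le> lam n k) \<and> (\<forall>k>M n. lam n k = 0) \<and> (\<Sum>k\<le>M n. lam n k) = 1
            \<and> w n = (\<Sum>k\<le>M n. lam n k *\<^sub>R x k)"
    by (rule choice[THEN exE])
  have rep: "\<And>n k. 0 \<le> lam n k" "\<And>n k. k > M n \<Longrightarrow> lam n k = 0" "\<And>n. (\<Sum>k\<le>M n. lam n k) = 1"
      "\<And>n. w n = (\<Sum>k\<le>M n. lam n k *\<^sub>R x k)"
    using lm by auto
  have le1: "lam n k \<le> 1" for n k
  proof (cases "k \<le> M n")
    case True thus ?thesis using member_le_sum[of k "{..M n}" "lam n"] rep(1,3) by simp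
  next
    case False thus ?thesis using rep(2) by simp
  qed
  obtain \<phi> where \<phi>: "strict_mono \<phi>" "\<And>k. convergent (\<lambda>i. lam (\<phi> i) k)"
    using diag_conv[of lam] rep(1) le1 by blast
  define L where "L i k = lam (\<phi> i) k" for i k
  define MM where "MM i = M (\<phi> i)" for i
  define mu where "mu k = lim (\<lambda>i. L i k)" for k
  have Lmu: "(\<lambda>i. L i k) \<longlonglongrightarrow> mu k" for k
    using \<phi>(2) by (simp add: L_def mu_def convergent_LIMSEQ_iff)
  have L0: "0 \<le> L i k" for i k by (simp add: L_def rep(1))
  have Lz: "k > MM i \<Longrightarrow> L i k = 0" for i k by (simp add: L_def MM_def rep(2))
  have sumext: "(\<Sum>k\<le>N. L i k) = 1" if "MM i \<le> N" for i N
  proof -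
    have "(\<Sum>k\<le>N. L i k) = (\<Sum>k\<le>MM i. L i k)"
      by (rule sum.mono_neutral_right) (use that Lz in auto)
    thus ?thesis using rep(3) by (simp add: L_def MM_def)
  qed
  have sumle: "(\<Sum>k\<le>N. L i k) \<le> 1" for i N
  proof -
    have "(\<Sum>k\<le>N. L i k) \<le> (\<Sum>k\<le>max N (MM i). L i k)" by (rule sum_mono2) (auto simp: L0)
    also have "\<dots> = 1" by (rule sumext) simp
    finally show ?thesis .
  qed
  have mu0: "0 \<le> mu k" for k
    using Lmu by (rule LIMSEQ_le_const) (auto simp: L0)
  have musum: "(\<Sum>k\<le>N. mu k) \<le> 1" for N
  proof -
    have "(\<lambda>i. \<Sum>k\<le>N. L i k) \<longlonglongrightarrow> (\<Sum>k\<le>N. mu k)" by (intro tendsto_sum Lmu)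
    thus ?thesis by (rule LIMSEQ_le_const2) (use sumle in auto)
  qed
  have smu: "summable mu"
  proof (rule summableI_nonneg_bounded[where x=1])
    fix N
    have "sum mu {..<N} \<le> (\<Sum>k\<le>N. mu k)" by (rule sum_mono2) (auto simp: mu0)
    thus "sum mu {..<N} \<le> 1" using musum[of N] by linarith
  qed (rule mu0)
  define s where "s = suminf mu"
  have smx: "summable (\<lambda>k. mu k *\<^sub>R x k)"
  proof (rule summable_comparison_test[OF _ summable_mult2[OF smu, of B]])
    show "\<exists>N. \<forall>k\<ge>N. norm (mu k *\<^sub>R x k) \<le> mu k * B"
      using mu0 B by (auto intro: mult_left_mono)
  qed
  define u where "u = suminf (\<lambda>k. mu k *\<^sub>R x k)"
  have limu: "(\<lambda>N. \<Sum>k\<le>N. mu k *\<^sub>R x k) \<longlonglongrightarrow> u" using summable_LIMSEQ'[OF smx] by (simp add: u_def)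
  have lims: "(\<lambda>N. \<Sum>k\<le>N. mu k) \<longlonglongrightarrow> s" using summable_LIMSEQ'[OF smu] by (simp add: s_def)

  have exP: "\<exists>n. n \<ge> N \<and> (\<Sum>k\<le>N. \<bar>L n k - mu k\<bar>) < 1 / (real N + 1)" for N
  proof -
    have "(\<lambda>i. \<Sum>k\<le>N. \<bar>L i k - mu k\<bar>) \<longlonglongrightarrow> (\<Sum>k\<le>N. \<bar>mu k - mu k\<bar>)"
      by (intro tendsto_sum tendsto_rabs tendsto_diff Lmu tendsto_const)
    hence "(\<lambda>i. \<Sum>k\<le>N. \<bar>L i k - mu k\<bar>) \<longlonglongrightarrow> 0" by simp
    moreover have "(0::real) < 1 / (real N + 1)" by simp
    ultimately have "eventually (\<lambda>i. (\<Sum>k\<le>N. \<bar>L i k - mu k\<bar>) < 1 / (real N + 1)) sequentially"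
      by (rule order_tendstoD(2))
    then obtain i0 where "\<forall>i\<ge>i0. (\<Sum>k\<le>N. \<bar>L i k - mu k\<bar>) < 1 / (real N + 1)"
      by (auto simp: eventually_sequentially)
    thus ?thesis by (intro exI[of _ "max i0 N"]) auto
  qed
  define P where "P N = (SOME n. n \<ge> N \<and> (\<Sum>k\<le>N. \<bar>L n k - mu k\<bar>) < 1 / (real N + 1))" for N
  have P: "P N \<ge> N" "(\<Sum>k\<le>N. \<bar>L (P N) k - mu k\<bar>) < 1 / (real N + 1)" for N
    using someI_ex[OF exP[of N]] by (auto simp: P_def)
  define NN where "NN = rec_nat 0 (\<lambda>j a. a + P a + MM (P a) + 2)"
  have NNS: "NN (Suc j) = NN j + P (NN j) + MM (P (NN j)) + 2" for j by (simp add: NN_def)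
  define n where "n j = P (NN j)" for j
  have NNmono: "strict_mono NN" unfolding strict_mono_Suc_iff by (simp add: NNS)
  have NNge: "j \<le> NN j" for j using NNmono by (rule seq_suble)
  have nmono: "strict_mono n" unfolding strict_mono_Suc_iff
  proof
    fix j
    have "n j < NN (Suc j)" by (simp add: n_def NNS)
    also have "\<dots> \<le> n (Suc j)" by (simp add: n_def P(1))
    finally show "n j < n (Suc j)" .
  qed
  have Mlt: "MM (n j) < NN (Suc j)" for j by (simp add: n_def NNS)
  define F where "F j = {NN j<..<NN (Suc j)}" for j
  define a where "a j = (\<Sum>k\<le>NN j. L (n j) k *\<^sub>R x k)" for j
  define t where "t j = (\<Sum>k\<in>F j. L (n j) k)" for j
  define c where "c j k = (if t j = 0 then (if k = Suc (NN j) then 1 else 0) else L (n j) k / t j)" for j k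
  define z where "z j = (\<Sum>k\<in>F j. c j k *\<^sub>R x k)" for j
  have SucF: "Suc (NN j) \<in> F j" for j by (simp add: F_def NNS)
  have splitI: "{..<NN (Suc j)} = {..NN j} \<union> F j" for j by (auto simp: F_def NNS)
  have decomp_s: "1 = (\<Sum>k\<le>NN j. L (n j) k) + t j" for j
  proof -
    have "(\<Sum>k<NN (Suc j). L (n j) k) = (\<Sum>k\<le>MM (n j). L (n j) k)"
      by (rule sum.mono_neutral_right) (use Mlt[of j] Lz in auto)
    also have "\<dots> = 1" using rep(3) by (simp add: L_def MM_def)
    finally have "(\<Sum>k<NN (Suc j). L (n j) k) = 1" .
    moreover have "(\<Sum>k<NN (Suc j). L (n j) k) = (\<Sum>k\<le>NN j. L (n j) k) + t j"
      unfolding splitI t_def by (rule sum.union_disjoint) (auto simp: F_def)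
    ultimately show ?thesis by simp
  qed
  have decomp_v: "w (\<phi> (n j)) = a j + (\<Sum>k\<in>F j. L (n j) k *\<^sub>R x k)" for j
  proof -
    have "(\<Sum>k<NN (Suc j). L (n j) k *\<^sub>R x k) = (\<Sum>k\<le>MM (n j). L (n j) k *\<^sub>R x k)"
      by (rule sum.mono_neutral_right) (use Mlt[of j] Lz in auto)
    also have "\<dots> = w (\<phi> (n j))" using rep(4) by (simp add: L_def MM_def)
    finally have "(\<Sum>k<NN (Suc j). L (n j) k *\<^sub>R x k) = w (\<phi> (n j))" .
    moreover have "(\<Sum>k<NN (Suc j). L (n j) k *\<^sub>R x k) = a j + (\<Sum>k\<in>F j. L (n j) k *\<^sub>R x k)"
      unfolding splitI a_def by (rule sum.union_disjoint) (auto simp: F_def)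
    ultimately show ?thesis by simp
  qed
  have tz: "t j *\<^sub>R z j = (\<Sum>k\<in>F j. L (n j) k *\<^sub>R x k)" for j
  proof (cases "t j = 0")
    case True
    then have "\<forall>k\<in>F j. L (n j) k = 0"
      using sum_nonneg_eq_0_iff[of "F j" "L (n j)"] L0 by (simp add: t_def F_def)
    thus ?thesis using True by simp
  next
    case False
    have "t j *\<^sub>R z j = (\<Sum>k\<in>F j. (t j * c j k) *\<^sub>R x k)" by (simp add: z_def scaleR_sum_right)
    also have "\<dots> = (\<Sum>k\<in>F j. L (n j) k *\<^sub>R x k)" using False by (simp add: c_def)
    finally show ?thesis .
  qed
  have Wdec: "w (\<phi> (n j)) = a j + t j *\<^sub>R z j" for j using decomp_v tz by simp
  have block: "block_seq_conv x z"
    unfolding block_seq_conv_def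
  proof (intro exI[of _ F] exI[of _ c] conjI allI)
    fix m
    show "finite (F m)" by (simp add: F_def)
    show "F m \<noteq> {}" using SucF by auto
    show "\<forall>k\<in>F m. 0 \<le> c m k" by (auto simp: c_def L0 t_def sum_nonneg intro: divide_nonneg_nonneg)
    show "(\<Sum>k\<in>F m. c m k) = 1"
    proof (cases "t m = 0")
      case True thus ?thesis using SucF[of m] by (simp add: c_def F_def)
    next
      case False thus ?thesis by (simp add: c_def sum_divide_distrib[symmetric] t_def)
    qed
    show "z m = (\<Sum>k\<in>F m. c m k *\<^sub>R x k)" by (simp add: z_def)
    show "Max (F m) < Min (F (Suc m))"
    proof -
      have "Max (F m) \<in> F m" "Min (F (Suc m)) \<in> F (Suc m)"
        using SucF by (auto intro!: Max_in Min_in simp del: greaterThanLessThan_iff simp: F_def)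
      thus ?thesis by (auto simp: F_def)
    qed
  qed
  then have "banach_saks_set (range z)" using blk by blast
  then obtain r where r: "strict_mono r" "convergent (cesaro_mean (z \<circ> r))"
    unfolding banach_saks_set_def by blast
  have "bounded (range z)"
    using bounded_convex_hull[OF bx] block_in_hull[OF block] bounded_subset by blast
  then obtain Bz where Bz: "\<And>j. norm (z j) \<le> Bz" by (auto simp: bounded_iff)
  have E0: "(\<lambda>j. 1 / (real (NN j) + 1)) \<longlonglongrightarrow> 0"
  proof (rule Lim_null_comparison[OF always_eventually LIMSEQ_inverse_real_of_nat], intro allI)
    fix j
    have "real j \<le> real (NN j)" using NNge[of j] by simp
    thus "norm (1 / (real (NN j) + 1)) \<le> inverse (real (Suc j))"
      by (simp add: field_simps)
  qed
  have NNlim: "filterlim NN at_top sequentially" using NNmono by (rule filterlim_subseq)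
  have dL: "\<bar>(\<Sum>k\<le>NN j. L (n j) k) - (\<Sum>k\<le>NN j. mu k)\<bar> \<le> 1 / (real (NN j) + 1)" for j
  proof -
    have "\<bar>(\<Sum>k\<le>NN j. L (n j) k) - (\<Sum>k\<le>NN j. mu k)\<bar> = \<bar>\<Sum>k\<le>NN j. L (n j) k - mu k\<bar>"
      by (simp add: sum_subtractf)
    also have "\<dots> \<le> (\<Sum>k\<le>NN j. \<bar>L (n j) k - mu k\<bar>)" by (rule sum_abs)
    also have "\<dots> \<le> 1 / (real (NN j) + 1)" using P(2)[of "NN j"] by (simp add: n_def)
    finally show ?thesis .
  qed
  have dV: "norm (a j - (\<Sum>k\<le>NN j. mu k *\<^sub>R x k)) \<le> B * (1 / (real (NN j) + 1))" for j
  proof -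
    have "norm (a j - (\<Sum>k\<le>NN j. mu k *\<^sub>R x k)) = norm (\<Sum>k\<le>NN j. (L (n j) k - mu k) *\<^sub>R x k)"
      by (simp add: a_def sum_subtractf scaleR_diff_left)
    also have "\<dots> \<le> (\<Sum>k\<le>NN j. norm ((L (n j) k - mu k) *\<^sub>R x k))" by (rule norm_sum)
    also have "\<dots> \<le> (\<Sum>k\<le>NN j. \<bar>L (n j) k - mu k\<bar> * B)"
      by (rule sum_mono) (simp add: B mult_left_mono)
    also have "\<dots> = B * (\<Sum>k\<le>NN j. \<bar>L (n j) k - mu k\<bar>)" by (simp add: sum_distrib_left mult.commute)
    also have "\<dots> \<le> B * (1 / (real (NN j) + 1))"
      using P(2)[of "NN j"] B0 by (intro mult_left_mono) (simp_all add: n_def)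
    finally show ?thesis .
  qed
  have ta: "t \<longlonglongrightarrow> 1 - s"
  proof -
    have d0: "(\<lambda>j. (\<Sum>k\<le>NN j. L (n j) k) - (\<Sum>k\<le>NN j. mu k)) \<longlonglongrightarrow> 0"
      by (rule Lim_null_comparison[OF always_eventually E0]) (use dL in auto)
    have s2: "(\<lambda>j. \<Sum>k\<le>NN j. mu k) \<longlonglongrightarrow> s"
      using filterlim_compose[OF lims NNlim] by (simp add: o_def)
    have "(\<lambda>j. 1 - (((\<Sum>k\<le>NN j. L (n j) k) - (\<Sum>k\<le>NN j. mu k)) + (\<Sum>k\<le>NN j. mu k))) \<longlonglongrightarrow> 1 - (0 + s)"
      by (intro tendsto_intros d0 s2)
    moreover have "t = (\<lambda>j. 1 - (((\<Sum>k\<le>NN j. L (n j) k) - (\<Sum>k\<le>NN j. mu k)) + (\<Sum>k\<le>NN j. mu k)))"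
    proof (rule ext)
      fix j show "t j = 1 - (((\<Sum>k\<le>NN j. L (n j) k) - (\<Sum>k\<le>NN j. mu k)) + (\<Sum>k\<le>NN j. mu k))"
        using decomp_s[of j] by linarith
    qed
    ultimately show ?thesis by simp
  qed
  have aa: "a \<longlonglongrightarrow> u"
  proof -
    have Bt: "(\<lambda>j. B * (1 / (real (NN j) + 1))) \<longlonglongrightarrow> 0"
      using tendsto_mult_left_zero[OF E0, of B] by simp
    have d0: "(\<lambda>j. a j - (\<Sum>k\<le>NN j. mu k *\<^sub>R x k)) \<longlonglongrightarrow> 0"
      by (rule Lim_null_comparison[OF always_eventually Bt]) (use dV in auto)
    have s2: "(\<lambda>j. \<Sum>k\<le>NN j. mu k *\<^sub>R x k) \<longlonglongrightarrow> u"
      using filterlim_compose[OF limu NNlim] by (simp add: o_def)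
    have "(\<lambda>j. (a j - (\<Sum>k\<le>NN j. mu k *\<^sub>R x k)) + (\<Sum>k\<le>NN j. mu k *\<^sub>R x k)) \<longlonglongrightarrow> 0 + u"
      by (intro tendsto_intros d0 s2)
    thus ?thesis by simp
  qed
  define \<psi> where "\<psi> = \<phi> \<circ> n \<circ> r"
  have smp: "strict_mono \<psi>" unfolding \<psi>_def by (intro strict_mono_o \<phi>(1) nmono r(1))
  have g: "convergent (cesaro_mean (\<lambda>i. u + (1 - s) *\<^sub>R (z \<circ> r) i))"
  proof -
    from r(2) obtain Z where Z: "cesaro_mean (z \<circ> r) \<longlonglongrightarrow> Z" by (auto simp: convergent_def)
    have "(\<lambda>m. u + (1 - s) *\<^sub>R cesaro_mean (z \<circ> r) m) \<longlonglongrightarrow> u + (1 - s) *\<^sub>R Z"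
      by (intro tendsto_intros Z)
    moreover have "cesaro_mean (\<lambda>i. u + (1 - s) *\<^sub>R (z \<circ> r) i) = (\<lambda>m. u + (1 - s) *\<^sub>R cesaro_mean (z \<circ> r) m)"
    proof (rule ext)
      fix m show "cesaro_mean (\<lambda>i. u + (1 - s) *\<^sub>R (z \<circ> r) i) m = u + (1 - s) *\<^sub>R cesaro_mean (z \<circ> r) m"
        using cesaro_add[of "\<lambda>i. u" "\<lambda>i. (1 - s) *\<^sub>R (z \<circ> r) i" m] cesaro_scale[of "1 - s" "z \<circ> r" m]
          cesaro_const[of u m] by simp
    qed
    ultimately show ?thesis by (auto simp: convergent_def)
  qed
  have diff: "(\<lambda>i. (w \<circ> \<psi>) i - (u + (1 - s) *\<^sub>R (z \<circ> r) i)) \<longlonglongrightarrow> 0"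
  proof -
    have e1: "(\<lambda>i. a (r i) - u) \<longlonglongrightarrow> 0"
      using tendsto_diff[OF LIMSEQ_subseq_LIMSEQ[OF aa r(1)] tendsto_const[of u]] by (simp add: o_def)
    have tr: "(\<lambda>i. t (r i) - (1 - s)) \<longlonglongrightarrow> 0"
      using tendsto_diff[OF LIMSEQ_subseq_LIMSEQ[OF ta r(1)] tendsto_const[of "1 - s"]] by (simp add: o_def)
    hence "(\<lambda>i. \<bar>t (r i) - (1 - s)\<bar> * Bz) \<longlonglongrightarrow> 0"
      using tendsto_mult_right_zero[OF tendsto_rabs_zero[OF tr], of Bz] by (simp add: mult.commute)
    hence e2: "(\<lambda>i. (t (r i) - (1 - s)) *\<^sub>R z (r i)) \<longlonglongrightarrow> 0"
      by (rule Lim_null_comparison[OF always_eventually, rotated]) (simp add: Bz mult_left_mono)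
    have "(\<lambda>i. (a (r i) - u) + (t (r i) - (1 - s)) *\<^sub>R z (r i)) \<longlonglongrightarrow> 0 + 0"
      by (intro tendsto_add e1 e2)
    moreover have "(\<lambda>i. (w \<circ> \<psi>) i - (u + (1 - s) *\<^sub>R (z \<circ> r) i)) = (\<lambda>i. (a (r i) - u) + (t (r i) - (1 - s)) *\<^sub>R z (r i))"
      by (rule ext) (simp add: \<psi>_def Wdec algebra_simps)
    ultimately show ?thesis by simp
  qed
  show "\<exists>r. strict_mono r \<and> convergent (cesaro_mean (w \<circ> r))"
    using smp cesaro_conv_perturb[OF diff g] by blast
qed


theorem lemma2p9:
  fixes x y :: "nat \<Rightarrow> 'a::banach"
  assumes "bounded (range x)" and "bounded (range y)"
  shows "(summable (\<lambda>n. norm (x n - y n)) \<longrightarrow>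
            (banach_saks_set (range x) \<longleftrightarrow> banach_saks_set (range y)))
         \<and> (banach_saks_set (convex hull (range x)) \<longleftrightarrow>
            (\<forall>z. block_seq_conv x z \<longrightarrow> banach_saks_set (range z)))"
proof (intro conjI impI iffI)
  assume s: "summable (\<lambda>n. norm (x n - y n))"
  have d1: "(\<lambda>n. norm (x n - y n)) \<longlonglongrightarrow> 0" using summable_LIMSEQ_zero[OF s] .
  have d2: "(\<lambda>n. norm (y n - x n)) \<longlonglongrightarrow> 0" using d1 by (simp add: norm_minus_commute)
  { assume "banach_saks_set (range x)"
    thus "banach_saks_set (range y)" using bs_part_a[OF d2] by blast }
  { assume "banach_saks_set (range y)"
    thus "banach_saks_set (range x)" using bs_part_a[OF d1] by blast }
next
  assume h: "banach_saks_set (convex hull (range x))"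
  show "\<forall>z. block_seq_conv x z \<longrightarrow> banach_saks_set (range z)"
    using bs_mono[OF h] block_in_hull by blast
next
  assume "\<forall>z. block_seq_conv x z \<longrightarrow> banach_saks_set (range z)"
  thus "banach_saks_set (convex hull (range x))" using bs_hull[OF assms(1)] by blast
qed

end
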